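(* Let $p,q$ be primes with $p>2$, $q>p$, $q\ge 5$, $p\mid q-1$, $p\nmid q+1$, $p^2\nmid q-1$. Let $\lambda$ be a fixed generator of the unique subgroup of order $p$ of $(\mathbf Z/(q))^*$. Then a system of representatives of the conjugacy classes of subgroups of order $p$ of $\mathrm{GL}(2,q)$ is $$\left\langle \begin{pmatrix}1&0\\0&\lambda\end{pmatrix}\right\rangle,\ \left\langle \begin{pmatrix}\lambda&0\\0&\lambda\end{pmatrix}\right\rangle,\ \left\langle \begin{pmatrix}\lambda&0\\0&\lambda^{-1}\end{pmatrix}\right\rangle,\ \left\langle \begin{pmatrix}\lambda&0\\0&\lambda^{k}\end{pmatrix}\right\rangle,$$ where $k$ runs over a system of representatives of the elements of $(\mathbf Z/(p))^*\setminus\{1,-1\}$ under the equivalence relation $k\sim l$ if and only if $kl\equiv 1\pmod p$. In particular, the number of conjugacy classes of subgroups of order $p$ of $\mathrm{GL}(2,q)$ is $(p+3)/2$. *)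

theory Defs
  imports "HOL-Algebra.Algebra" "HOL-Number_Theory.Number_Theory"
begin

text \<open>2x2 matrices over Z/(q), entries represented by integers in {0..<q};
  a quadruple (a,b,c,d) stands for the matrix [[a,b],[c,d]].\<close>
type_synonym mat2 = "int \<times> int \<times> int \<times> int"

definition mat2_mult :: "int \<Rightarrow> mat2 \<Rightarrow> mat2 \<Rightarrow> mat2" where
  "mat2_mult q A B = (case A of (a,b,c,d) \<Rightarrow> case B of (e,f,g,h) \<Rightarrow>
     ((a*e + b*g) mod q, (a*f + b*h) mod q, (c*e + d*g) mod q, (c*f + d*h) mod q))"

definition mat2_det :: "mat2 \<Rightarrow> int" where
  "mat2_det A = (case A of (a,b,c,d) \<Rightarrow> a * d - b * c)"

definition mat2_entries_in :: "int \<Rightarrow> mat2 \<Rightarrow> bool" where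
  "mat2_entries_in q A = (case A of (a,b,c,d) \<Rightarrow>
     0 \<le> a \<and> a < q \<and> 0 \<le> b \<and> b < q \<and> 0 \<le> c \<and> c < q \<and> 0 \<le> d \<and> d < q)"

definition GL2 :: "int \<Rightarrow> mat2 monoid" where
  "GL2 q = \<lparr> carrier = {A. mat2_entries_in q A \<and> mat2_det A mod q \<noteq> 0},
             monoid.mult = mat2_mult q,
             one = (1,0,0,1) \<rparr>"

definition conj_subgroups :: "('a, 'b) monoid_scheme \<Rightarrow> 'a set \<Rightarrow> 'a set \<Rightarrow> bool" where
  "conj_subgroups G H K \<longleftrightarrow>
     (\<exists>g\<in>carrier G. K = (\<lambda>h. g \<otimes>\<^bsub>G\<^esub> h \<otimes>\<^bsub>G\<^esub> inv\<^bsub>G\<^esub> g) ` H)"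

definition conj_class_reps :: "('a, 'b) monoid_scheme \<Rightarrow> nat \<Rightarrow> 'a set set \<Rightarrow> bool" where
  "conj_class_reps G n R \<longleftrightarrow>
     (\<forall>H\<in>R. subgroup H G \<and> card H = n) \<and>
     (\<forall>H. subgroup H G \<and> card H = n \<longrightarrow> (\<exists>K\<in>R. conj_subgroups G H K)) \<and>
     (\<forall>H\<in>R. \<forall>K\<in>R. conj_subgroups G H K \<longrightarrow> H = K)"

definition subgroup_conj_classes :: "('a, 'b) monoid_scheme \<Rightarrow> nat \<Rightarrow> 'a set set set" where
  "subgroup_conj_classes G n =
     {{K. subgroup K G \<and> conj_subgroups G H K} | H. subgroup H G \<and> card H = n}"

text \<open>S is a system of representatives of (Z/(p))^* minus {1,-1} (residues 2..p-2)
  under the equivalence k ~ l iff k = l or k*l = 1 mod p.\<close>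
definition inv_pair_reps :: "nat \<Rightarrow> nat set \<Rightarrow> bool" where
  "inv_pair_reps p S \<longleftrightarrow> S \<subseteq> {2..p-2} \<and>
     (\<forall>k\<in>{2..p-2}. \<exists>!l. l \<in> S \<and> (k = l \<or> [k * l = 1] (mod p)))"

end

theory Submission
  imports Defs
begin


lemma funpow_mult_fix: "(f ^^ p) x = x \<Longrightarrow> (f ^^ (p * k)) x = x"
  by (induction k) (simp_all add: funpow_add)

lemma funpow_mod_fix: "(f ^^ p) x = x \<Longrightarrow> (f ^^ n) x = (f ^^ (n mod p)) x"
proof -
  assume h: "(f ^^ p) x = x"
  have "n = n mod p + p * (n div p)" by simp
  hence "(f ^^ n) x = (f ^^ (n mod p)) ((f ^^ (p * (n div p))) x)"
    by (metis funpow_add o_apply)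
  thus ?thesis using funpow_mult_fix[OF h] by simp
qed

lemma orbit_dvd:
  fixes f :: "'a \<Rightarrow> 'a" and p :: nat
  assumes fin: "finite Y" and maps: "\<And>x. x \<in> Y \<Longrightarrow> f x \<in> Y"
    and per: "\<And>x. x \<in> Y \<Longrightarrow> (f ^^ p) x = x"
    and nofix: "\<And>x. x \<in> Y \<Longrightarrow> f x \<noteq> x"
    and pr: "Factorial_Ring.prime p"
  shows "p dvd card Y"
proof -
  have p0: "p > 0" using pr prime_gt_0_nat by blast
  have mapsn: "(f ^^ n) x \<in> Y" if "x \<in> Y" for x n
    using that by (induction n) (auto intro: maps)
  define r where "r = {(x,y). x \<in> Y \<and> y \<in> Y \<and> (\<exists>i. y = (f ^^ i) x)}"
  have eq: "equiv Y r"
  proof (rule equivI)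
    show "refl_on Y r" unfolding refl_on_def r_def by (auto intro: exI[of _ 0])
    show "sym r"
    proof (rule symI)
      fix x y assume "(x,y) \<in> r"
      then obtain i where i: "y = (f ^^ i) x" "x \<in> Y" "y \<in> Y" by (auto simp: r_def)
      have le: "i \<le> p * i" using p0 by (cases p) auto
      hence pi: "p * i = (p * i - i) + i" by simp
      have "x = (f ^^ (p * i)) x" using funpow_mult_fix per i by metis
      also have "\<dots> = (f ^^ ((p * i - i) + i)) x" by (simp only: pi[symmetric])
      also have "\<dots> = (f ^^ (p * i - i)) y" unfolding funpow_add o_apply i(1) ..
      finally have "x = (f ^^ (p * i - i)) y" .
      thus "(y,x) \<in> r" using i by (auto simp: r_def)
    qed
    show "trans r"
    proof (rule transI)
      fix x y z assume "(x,y) \<in> r" "(y,z) \<in> r"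
      then obtain i j where ij: "y = (f ^^ i) x" "z = (f ^^ j) y" "x \<in> Y" "z \<in> Y"
        by (auto simp: r_def)
      hence "z = (f ^^ (j + i)) x" by (simp add: funpow_add)
      thus "(x,z) \<in> r" using ij by (auto simp: r_def)
    qed
    show "r \<subseteq> Y \<times> Y" by (auto simp: r_def)
  qed
  show ?thesis
  proof (rule equiv_imp_dvd_card[OF fin eq])
    fix C assume "C \<in> Y // r"
    then obtain x where x: "x \<in> Y" and C: "C = r `` {x}" by (auto elim: quotientE)
    have C2: "C = (\<lambda>i. (f ^^ i) x) ` {..<p}"
    proof
      show "C \<subseteq> (\<lambda>i. (f ^^ i) x) ` {..<p}"
      proof
        fix y assume "y \<in> C"
        then obtain i where "y = (f ^^ i) x" using C r_def by auto
        hence "y = (f ^^ (i mod p)) x" using funpow_mod_fix per x by metis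
        thus "y \<in> (\<lambda>i. (f ^^ i) x) ` {..<p}" using p0 by auto
      qed
      show "(\<lambda>i. (f ^^ i) x) ` {..<p} \<subseteq> C" using C r_def x mapsn by auto
    qed
    have noteq: "(f ^^ i) x \<noteq> (f ^^ j) x" if ij: "i < j" "j < p" for i j
    proof
      assume eqij: "(f ^^ i) x = (f ^^ j) x"
      define d where "d = p - (j - i)"
      have d: "0 < d" "d < p" using ij by (auto simp: d_def)
      have fd: "(f ^^ d) x = x"
      proof -
        have "(f ^^ (p - j)) ((f ^^ i) x) = (f ^^ (p - j)) ((f ^^ j) x)" using eqij by simp
        hence "(f ^^ (p - j + i)) x = (f ^^ (p - j + j)) x" by (simp add: funpow_add)
        moreover have "p - j + i = d" "p - j + j = p" using ij by (auto simp: d_def)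
        ultimately show ?thesis using per x by simp
      qed
      have "\<not> p dvd d" using d by (simp add: nat_dvd_not_less)
      hence "coprime p d" using pr by (simp add: prime_imp_coprime)
      hence "coprime d p" by (simp add: coprime_commute)
      then obtain k where k: "[d * k = 1] (mod p)" using cong_solve_coprime_nat by fastforce
      have "d * k > 0"
      proof (rule ccontr)
        assume "\<not> d * k > 0"
        hence "d * k = 0" by simp
        hence "[0 = 1] (mod p)" using k by (simp only:)
        thus False using pr prime_gt_1_nat[of p] by (simp add: cong_def)
      qed
      have m1: "(d * k) mod p = 1" using k pr prime_gt_1_nat[of p] by (simp add: cong_def)
      have dk: "d * k = 1 + p * ((d * k) div p)" using mod_mult_div_eq[of "d * k" p] m1 by simp
      have "(f ^^ (d * k)) x = x" using funpow_mult_fix[OF fd] by simp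
      hence "(f ^^ (1 + p * ((d * k) div p))) x = x" using dk by simp
      hence "f ((f ^^ (p * ((d * k) div p))) x) = x" by (simp add: funpow_add)
      hence "f x = x" using funpow_mult_fix[OF per[OF x]] by simp
      thus False using nofix x by blast
    qed
    have inj: "inj_on (\<lambda>i. (f ^^ i) x) {..<p}"
    proof (rule inj_onI)
      fix i j assume "i \<in> {..<p}" "j \<in> {..<p}" "(f ^^ i) x = (f ^^ j) x"
      thus "i = j" using noteq by (metis lessThan_iff linorder_neqE_nat)
    qed
    show "p dvd card C" using C2 inj card_image by fastforce
  qed
qed

lemma fix_count:
  fixes f :: "'a \<Rightarrow> 'a" and p :: nat
  assumes fin: "finite Z" and maps: "\<And>x. x \<in> Z \<Longrightarrow> f x \<in> Z"
    and per: "\<And>x. x \<in> Z \<Longrightarrow> (f ^^ p) x = x"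
    and pr: "Factorial_Ring.prime p"
  shows "p dvd card Z - card {x\<in>Z. f x = x}"
proof -
  let ?F = "{x\<in>Z. f x = x}"
  let ?Y = "Z - ?F"
  have p0: "p > 0" using pr prime_gt_0_nat by blast
  have "p dvd card ?Y"
  proof (rule orbit_dvd[OF _ _ _ _ pr])
    show "finite ?Y" using fin by simp
    show "f x \<in> ?Y" if x: "x \<in> ?Y" for x
    proof (rule ccontr)
      assume "f x \<notin> ?Y"
      hence fx: "f (f x) = f x" using maps x by auto
      have "(f ^^ n) (f x) = f x" for n by (induction n) (use fx in auto)
      hence "(f ^^ (p - 1)) (f x) = f x" by blast
      moreover have "(f ^^ (p - 1)) (f x) = (f ^^ Suc (p - 1)) x"
        by (simp only: funpow_Suc_right o_apply)
      moreover have "Suc (p - 1) = p" using p0 by simp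
      ultimately show False using per x by auto
    qed
    show "(f ^^ p) x = x" if "x \<in> ?Y" for x using per that by auto
    show "f x \<noteq> x" if "x \<in> ?Y" for x using that by auto
  qed
  moreover have "card ?Y = card Z - card ?F" using fin by (simp add: card_Diff_subset)
  ultimately show ?thesis by simp
qed



lemma mat2_mult_simp: "mat2_mult q (a,b,c,d) (e,f,g,h) =
     ((a*e + b*g) mod q, (a*f + b*h) mod q, (c*e + d*g) mod q, (c*f + d*h) mod q)"
  by (simp add: mat2_mult_def)

lemma mat2_det_simp: "mat2_det (a,b,c,d) = a * d - b * c" by (simp add: mat2_det_def)

lemma modL1: "((x mod q) * e + (y mod q) * g) mod q = (x*e+y*g) mod (q::int)"
  by (metis mod_add_eq mod_mult_left_eq)
lemma modL2: "(e * (x mod q) + g * (y mod q)) mod q = (e*x+g*y) mod (q::int)"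
  by (metis mod_add_eq mod_mult_right_eq)
lemma modL3: "((x mod q) * (y mod q) - (z mod q) * (w mod q)) mod q = (x*y-z*w) mod (q::int)"
  by (metis mod_diff_eq mod_mult_eq)

lemma det_mult_mod: "mat2_det (mat2_mult q A B) mod q = (mat2_det A * mat2_det B) mod q"
proof -
  obtain a b c d where A: "A = (a,b,c,d)" by (cases A) auto
  obtain e f g h where B: "B = (e,f,g,h)" by (cases B) auto
  have "mat2_det (mat2_mult q A B) mod q =
     (((a*e + b*g) mod q) * ((c*f + d*h) mod q) - ((a*f + b*h) mod q) * ((c*e + d*g) mod q)) mod q"
    by (simp add: A B mat2_mult_simp mat2_det_simp)
  also have "\<dots> = ((a*e + b*g) * (c*f + d*h) - (a*f + b*h) * (c*e + d*g)) mod q"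
    by (rule modL3)
  also have "(a*e + b*g) * (c*f + d*h) - (a*f + b*h) * (c*e + d*g) = (a * d - b * c) * (e * h - f * g)"
    by (simp add: algebra_simps)
  finally show ?thesis by (simp add: A B mat2_det_simp)
qed

definition app :: "int \<Rightarrow> mat2 \<Rightarrow> int \<times> int \<Rightarrow> int \<times> int" where
  "app q M v = (case M of (a,b,c,d) \<Rightarrow> case v of (x,y) \<Rightarrow> ((a*x+b*y) mod q, (c*x+d*y) mod q))"

lemma app_simp: "app q (a,b,c,d) (x,y) = ((a*x+b*y) mod q, (c*x+d*y) mod q)"
  by (simp add: app_def)

definition smul :: "int \<Rightarrow> int \<Rightarrow> int \<times> int \<Rightarrow> int \<times> int" where
  "smul q c v = ((c * fst v) mod q, (c * snd v) mod q)"

definition red :: "int \<Rightarrow> int \<times> int \<Rightarrow> int \<times> int" where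
  "red q v = (fst v mod q, snd v mod q)"

definition nzv :: "int \<Rightarrow> int \<times> int \<Rightarrow> bool" where
  "nzv q v \<longleftrightarrow> \<not> (fst v mod q = 0 \<and> snd v mod q = 0)"

definition nrm :: "int \<Rightarrow> int \<times> int \<Rightarrow> int \<times> int" where
  "nrm q v = (if fst v mod q \<noteq> 0 then (1, (snd v * fst v ^ (nat q - 2)) mod q) else (0,1))"

definition Xs :: "int \<Rightarrow> (int \<times> int) set" where
  "Xs q = (\<lambda>s. (1,s)) ` {0..<q} \<union> {(0,1)}"

locale gl2q =
  fixes q :: nat
  assumes q_prime: "Factorial_Ring.prime q"
begin

abbreviation "Q \<equiv> int q"
abbreviation "G \<equiv> GL2 Q"

lemma Q_prime: "Factorial_Ring.prime Q" using q_prime by simp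
lemma Q_gt1: "Q > 1" using q_prime prime_gt_1_nat by fastforce

lemma carrier_G: "A \<in> carrier G \<longleftrightarrow> mat2_entries_in Q A \<and> mat2_det A mod Q \<noteq> 0"
  by (simp add: GL2_def)
lemma mult_G: "A \<otimes>\<^bsub>G\<^esub> B = mat2_mult Q A B" by (simp add: GL2_def)
lemma one_G: "\<one>\<^bsub>G\<^esub> = (1,0,0,1)" by (simp add: GL2_def)

lemma prod_mod_nz: "x mod Q \<noteq> 0 \<Longrightarrow> y mod Q \<noteq> 0 \<Longrightarrow> (x*y) mod Q \<noteq> 0"
  using Q_prime by (metis dvd_eq_mod_eq_0 prime_dvd_mult_iff)

lemma entries_mult: "Q > 0 \<Longrightarrow> mat2_entries_in Q (mat2_mult Q A B)"
  by (cases A; cases B) (simp add: mat2_mult_simp mat2_entries_in_def)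

lemma G_group: "group G"
proof (rule groupI)
  fix x y assume x: "x \<in> carrier G" and y: "y \<in> carrier G"
  show "x \<otimes>\<^bsub>G\<^esub> y \<in> carrier G"
    using x y Q_gt1 by (simp add: carrier_G mult_G entries_mult det_mult_mod prod_mod_nz)
next
  show "\<one>\<^bsub>G\<^esub> \<in> carrier G" using Q_gt1 by (simp add: carrier_G one_G mat2_entries_in_def mat2_det_simp)
next
  fix x y z assume "x \<in> carrier G" "y \<in> carrier G" "z \<in> carrier G"
  show "x \<otimes>\<^bsub>G\<^esub> y \<otimes>\<^bsub>G\<^esub> z = x \<otimes>\<^bsub>G\<^esub> (y \<otimes>\<^bsub>G\<^esub> z)"
  proof -
    obtain a b c d where A: "x = (a,b,c,d)" by (cases x) auto
    obtain e f g h where B: "y = (e,f,g,h)" by (cases y) auto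
    obtain i j k l where C: "z = (i,j,k,l)" by (cases z) auto
    show ?thesis
      by (simp add: A B C mult_G mat2_mult_simp modL1 modL2) (simp add: algebra_simps)
  qed
next
  fix x assume x: "x \<in> carrier G"
  obtain a b c d where A: "x = (a,b,c,d)" by (cases x) auto
  show "\<one>\<^bsub>G\<^esub> \<otimes>\<^bsub>G\<^esub> x = x"
    using x by (simp add: A one_G mult_G mat2_mult_simp carrier_G mat2_entries_in_def)
next
  fix x assume x: "x \<in> carrier G"
  obtain a b c d where A: "x = (a,b,c,d)" by (cases x) auto
  let ?D = "a * d - b * c"
  have "coprime ?D Q"
    using x Q_prime by (simp add: A carrier_G mat2_det_simp prime_imp_coprime_int coprime_commute dvd_eq_mod_eq_0)
  then obtain u where u: "[?D * u = 1] (mod Q)" using cong_solve_coprime_int by blast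
  define y where "y = ((d*u) mod Q, (-b*u) mod Q, (-c*u) mod Q, (a*u) mod Q)"
  have yx: "y \<otimes>\<^bsub>G\<^esub> x = (1,0,0,1)"
  proof -
    have "y \<otimes>\<^bsub>G\<^esub> x = ((?D*u) mod Q, 0, 0, (?D*u) mod Q)"
      by (simp add: y_def A mult_G mat2_mult_simp modL1 modL2) (simp add: algebra_simps)
    also have "(?D*u) mod Q = 1" using u Q_gt1 by (simp add: cong_def)
    finally show ?thesis .
  qed
  have ent: "mat2_entries_in Q y" using Q_gt1 by (simp add: y_def mat2_entries_in_def)
  have "(mat2_det y * mat2_det x) mod Q = 1"
    using det_mult_mod[of Q y x] yx Q_gt1 by (simp add: mult_G mat2_det_simp)
  hence "mat2_det y mod Q \<noteq> 0" by (metis mod_mult_left_eq mult_zero_left mod_0 zero_neq_one)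
  hence "y \<in> carrier G" using ent by (simp add: carrier_G)
  thus "\<exists>y\<in>carrier G. y \<otimes>\<^bsub>G\<^esub> x = \<one>\<^bsub>G\<^esub>" using yx one_G by auto
qed


sublocale G: group G by (rule G_group)

definition dg :: "int \<Rightarrow> int \<Rightarrow> mat2" where "dg x y = (x,0,0,y)"

lemma dg_carrier: "0 < x \<Longrightarrow> x < Q \<Longrightarrow> 0 < y \<Longrightarrow> y < Q \<Longrightarrow> dg x y \<in> carrier G"
proof -
  assume a: "0 < x" "x < Q" "0 < y" "y < Q"
  hence "x mod Q \<noteq> 0" "y mod Q \<noteq> 0" by auto
  hence "(x*y) mod Q \<noteq> 0" by (rule prod_mod_nz)
  thus ?thesis using a by (simp add: dg_def carrier_G mat2_entries_in_def mat2_det_simp)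
qed

lemma dg_mult: "dg x y \<otimes>\<^bsub>G\<^esub> dg x' y' = dg ((x*x') mod Q) ((y*y') mod Q)"
  by (simp add: dg_def mult_G mat2_mult_simp)

lemma dg_pow: "0 \<le> x \<Longrightarrow> x < Q \<Longrightarrow> 0 \<le> y \<Longrightarrow> y < Q \<Longrightarrow>
   dg x y [^]\<^bsub>G\<^esub> (n::nat) = dg (x^n mod Q) (y^n mod Q)"
proof (induction n)
  case 0 thus ?case using Q_gt1 by (simp add: one_G dg_def)
next
  case (Suc n)
  thus ?case by (simp add: dg_mult mod_mult_left_eq mult.commute[of "_ ^ n"])
qed


definition cj :: "mat2 \<Rightarrow> mat2 \<Rightarrow> mat2" where "cj x h = x \<otimes>\<^bsub>G\<^esub> h \<otimes>\<^bsub>G\<^esub> inv\<^bsub>G\<^esub> x"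

lemma conj_iff: "conj_subgroups G H K \<longleftrightarrow> (\<exists>x\<in>carrier G. K = cj x ` H)"
  by (simp add: conj_subgroups_def cj_def)

lemma cj_carrier: "x \<in> carrier G \<Longrightarrow> h \<in> carrier G \<Longrightarrow> cj x h \<in> carrier G"
  by (simp add: cj_def)

lemma cj_one_set: "H \<subseteq> carrier G \<Longrightarrow> cj \<one>\<^bsub>G\<^esub> ` H = H"
proof -
  assume "H \<subseteq> carrier G"
  hence "\<forall>h\<in>H. cj \<one>\<^bsub>G\<^esub> h = h" by (auto simp: cj_def)
  thus ?thesis by (metis (mono_tags, lifting) image_cong image_ident)
qed

lemma cj_comp1: "x \<in> carrier G \<Longrightarrow> y \<in> carrier G \<Longrightarrow> h \<in> carrier G \<Longrightarrow>
   cj x (cj y h) = cj (x \<otimes>\<^bsub>G\<^esub> y) h"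
  by (simp add: cj_def G.inv_mult_group G.m_assoc)

lemma cj_comp: "x \<in> carrier G \<Longrightarrow> y \<in> carrier G \<Longrightarrow> H \<subseteq> carrier G \<Longrightarrow>
   cj x ` (cj y ` H) = cj (x \<otimes>\<^bsub>G\<^esub> y) ` H"
  unfolding image_image by (rule image_cong[OF refl]) (use cj_comp1 in blast)

lemma inv_cancel: "x \<in> carrier G \<Longrightarrow> z \<in> carrier G \<Longrightarrow> inv\<^bsub>G\<^esub> x \<otimes>\<^bsub>G\<^esub> (x \<otimes>\<^bsub>G\<^esub> z) = z"
  by (simp add: G.m_assoc[symmetric])

lemma cj_mult: "x \<in> carrier G \<Longrightarrow> a \<in> carrier G \<Longrightarrow> b \<in> carrier G \<Longrightarrow>
   cj x (a \<otimes>\<^bsub>G\<^esub> b) = cj x a \<otimes>\<^bsub>G\<^esub> cj x b"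
proof -
  assume c: "x \<in> carrier G" "a \<in> carrier G" "b \<in> carrier G"
  have "cj x a \<otimes>\<^bsub>G\<^esub> cj x b = x \<otimes>\<^bsub>G\<^esub> a \<otimes>\<^bsub>G\<^esub> (inv\<^bsub>G\<^esub> x \<otimes>\<^bsub>G\<^esub> x) \<otimes>\<^bsub>G\<^esub> b \<otimes>\<^bsub>G\<^esub> inv\<^bsub>G\<^esub> x"
    using c by (simp add: cj_def G.m_assoc inv_cancel)
  also have "\<dots> = x \<otimes>\<^bsub>G\<^esub> a \<otimes>\<^bsub>G\<^esub> b \<otimes>\<^bsub>G\<^esub> inv\<^bsub>G\<^esub> x" using c by simp
  also have "\<dots> = cj x (a \<otimes>\<^bsub>G\<^esub> b)" using c by (simp add: cj_def G.m_assoc)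
  finally show ?thesis by simp
qed

lemma cj_pow: "x \<in> carrier G \<Longrightarrow> g \<in> carrier G \<Longrightarrow> cj x (g [^]\<^bsub>G\<^esub> (n::nat)) = (cj x g) [^]\<^bsub>G\<^esub> n"
proof (induction n)
  case 0 thus ?case by (simp add: cj_def)
next
  case (Suc n) thus ?case by (simp add: cj_mult)
qed

definition W :: mat2 where "W = (0,1,1,0)"

lemma W_carrier: "W \<in> carrier G"
  using Q_gt1 by (simp add: W_def carrier_G mat2_entries_in_def mat2_det_simp zmod_minus1)

lemma W_inv: "inv\<^bsub>G\<^esub> W = W"
proof -
  have "W \<otimes>\<^bsub>G\<^esub> W = \<one>\<^bsub>G\<^esub>" using Q_gt1 by (simp add: W_def mult_G one_G mat2_mult_simp)
  thus ?thesis using W_carrier by (simp add: G.inv_equality)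
qed

lemma cj_W_dg: "0 \<le> x \<Longrightarrow> x < Q \<Longrightarrow> 0 \<le> y \<Longrightarrow> y < Q \<Longrightarrow> cj W (dg x y) = dg y x"
  unfolding cj_def W_inv by (simp add: W_def dg_def mult_G mat2_mult_simp)


end

locale gsetup = gl2q +
  fixes p lam :: nat and S :: "nat set"
  assumes p_prime: "Factorial_Ring.prime p" and p_gt2: "p > 2" and q_gt_p: "q > p"
    and p_dvd: "p dvd q - 1" and lam_lt: "lam < q" and ord_lam: "ord q lam = p"
    and S_reps: "inv_pair_reps p S"
begin

lemma cop_lam: "coprime q lam" using ord_lam p_gt2 ord_eq_0[of q lam] by auto

definition e :: "nat \<Rightarrow> int" where "e k = int (lam ^ k mod q)"

lemma lam_pow_mod_nz: "lam ^ k mod q \<noteq> 0"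
proof
  assume "lam ^ k mod q = 0"
  hence "q dvd lam ^ k" by auto
  moreover have "coprime q (lam ^ k)" using cop_lam by simp
  ultimately have "is_unit q" by (meson coprime_absorb_left)
  thus False using q_prime by auto
qed

lemma e_range: "0 < e k" "e k < Q"
  using lam_pow_mod_nz q_prime prime_gt_1_nat[of q] by (auto simp: e_def)

lemma e_pow: "e k ^ n mod Q = e (k * n)"
  by (simp add: e_def power_mod power_mult flip: of_nat_power of_nat_mod)

lemma e_mult: "(e i * e j) mod Q = e (i + j)"
  by (simp add: e_def mod_mult_eq power_add flip: of_nat_mult of_nat_mod)

lemma e_0: "e 0 = 1" using q_prime prime_gt_1_nat[of q] by (simp add: e_def)
lemma e_1: "e 1 = int lam" using lam_lt by (simp add: e_def)

lemma lam_pow_eq_aux: "i \<le> j \<Longrightarrow> lam ^ i mod q = lam ^ j mod q \<longleftrightarrow> p dvd (j - i)"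
proof -
  assume ij: "i \<le> j"
  have "lam ^ j = lam ^ i * lam ^ (j - i)" using ij by (simp flip: power_add)
  hence "lam ^ i mod q = lam ^ j mod q \<longleftrightarrow> [lam ^ i * 1 = lam ^ i * lam ^ (j - i)] (mod q)"
    by (simp add: cong_def)
  also have "\<dots> \<longleftrightarrow> [1 = lam ^ (j - i)] (mod q)"
    using cop_lam by (intro cong_mult_lcancel_nat) (simp add: coprime_commute)
  also have "\<dots> \<longleftrightarrow> p dvd (j - i)" using ord_divides[of lam "j-i" q] ord_lam by (simp add: cong_sym_eq)
  finally show ?thesis .
qed

lemma e_eq_iff: "e i = e j \<longleftrightarrow> [i = j] (mod p)"
proof (cases "i \<le> j")
  case True thus ?thesis using lam_pow_eq_aux[of i j] cong_altdef_nat[of i j p] cong_sym_eq[of i j p] by (simp add: e_def)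
next
  case False thus ?thesis using lam_pow_eq_aux[of j i] cong_altdef_nat[of j i p] by (auto simp: e_def)
qed

lemma roots_nat: "{x\<in>{..<q}. [x ^ p = 1] (mod q)} = (\<lambda>k. lam ^ k mod q) ` {..<p}"
proof (rule sym, rule card_seteq)
  have "card {x\<in>{..<q}. [x ^ p = 1] (mod q)} \<le> p"
    using q_prime p_gt2 by (intro roots_mod_prime_bound) auto
  also have "\<dots> = card ((\<lambda>k. lam ^ k mod q) ` {..<p})"
    using inj_power_mod[OF cop_lam] ord_lam by (subst card_image) auto
  finally show "card {x\<in>{..<q}. [x ^ p = 1] (mod q)} \<le> card ((\<lambda>k. lam ^ k mod q) ` {..<p})" .
next
  show "(\<lambda>k. lam ^ k mod q) ` {..<p} \<subseteq> {x\<in>{..<q}. [x ^ p = 1] (mod q)}"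
  proof safe
    fix k assume "k < p"
    have "[(lam ^ p) ^ k = 1 ^ k] (mod q)"
      by (intro cong_pow) (use ord_lam ord[of lam q] in auto)
    thus "[(lam ^ k mod q) ^ p = 1] (mod q)"
      by (simp add: power_mult [symmetric] cong_def power_mod mult.commute)
  qed (use q_prime prime_gt_0_nat in auto)
qed auto

lemma roots_int: "0 < m \<Longrightarrow> m < Q \<Longrightarrow> m ^ p mod Q = 1 \<Longrightarrow> \<exists>k<p. m = e k"
proof -
  assume m: "0 < m" "m < Q" "m ^ p mod Q = 1"
  define n where "n = nat m"
  have mn: "m = int n" using m by (simp add: n_def)
  have "n ^ p mod q = 1" using m(3) unfolding mn by (metis of_nat_1 of_nat_eq_iff of_nat_mod of_nat_power)
  hence "n \<in> {x\<in>{..<q}. [x ^ p = 1] (mod q)}" using m(2) mn q_prime prime_gt_1_nat[of q]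
    by (auto simp: cong_def)
  then obtain k where "k < p" "n = lam ^ k mod q" unfolding roots_nat by auto
  thus ?thesis by (auto simp: mn e_def)
qed


definition gen :: "nat \<Rightarrow> nat \<Rightarrow> mat2" where "gen a b = dg (e a) (e b)"

lemma gen_carrier: "gen a b \<in> carrier G"
  unfolding gen_def by (rule dg_carrier) (simp_all add: e_range)

lemma gen_pow: "gen a b [^]\<^bsub>G\<^esub> (n::nat) = gen (a * n) (b * n)"
  unfolding gen_def using e_range[of a] e_range[of b] by (simp add: dg_pow e_pow)

lemma gen_eq: "gen a b = gen c d \<longleftrightarrow> [a = c] (mod p) \<and> [b = d] (mod p)"
  by (simp add: gen_def dg_def e_eq_iff)

lemma gen_one: "\<one>\<^bsub>G\<^esub> = gen 0 0"
  by (simp add: gen_def dg_def e_0 one_G)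

definition nondeg :: "nat \<Rightarrow> nat \<Rightarrow> bool" where "nondeg a b \<longleftrightarrow> \<not> (p dvd a \<and> p dvd b)"

lemma ord_gen: "nondeg a b \<Longrightarrow> group.ord G (gen a b) = p"
proof -
  assume nd: "nondeg a b"
  have key: "group.ord G (gen a b) dvd n \<longleftrightarrow> p dvd n" for n
  proof -
    have "group.ord G (gen a b) dvd n \<longleftrightarrow> gen a b [^]\<^bsub>G\<^esub> n = \<one>\<^bsub>G\<^esub>"
      using G.pow_eq_id[OF gen_carrier] by simp
    also have "\<dots> \<longleftrightarrow> p dvd a * n \<and> p dvd b * n"
      by (simp add: gen_pow gen_one gen_eq cong_0_iff)
    also have "\<dots> \<longleftrightarrow> p dvd n" using nd p_prime unfolding nondeg_def
      by (auto simp: prime_dvd_mult_iff)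
    finally show ?thesis .
  qed
  show ?thesis using key[of p] key[of "group.ord G (gen a b)"] by (simp add: dvd_antisym)
qed

lemma finite_G: "finite (carrier G)"
proof (rule finite_subset)
  show "carrier G \<subseteq> {0..<Q} \<times> {0..<Q} \<times> {0..<Q} \<times> {0..<Q}"
    by (auto simp: carrier_G mat2_entries_in_def)
qed simp

definition Sub :: "nat \<Rightarrow> nat \<Rightarrow> mat2 set" where "Sub a b = generate G {gen a b}"

lemma Sub_eq0: "Sub a b = {gen (a * k) (b * k) | k. True}"
  unfolding Sub_def using G.generate_pow_on_finite_carrier[OF finite_G gen_carrier]
  by (simp add: gen_pow)

lemma Sub_eq: "Sub a b = range (\<lambda>k. gen (a * k) (b * k))"
  unfolding Sub_eq0 by auto

lemma Sub_subgroup: "subgroup (Sub a b) G"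
  unfolding Sub_def using gen_carrier by (intro G.generate_is_subgroup) auto

lemma Sub_card: "nondeg a b \<Longrightarrow> card (Sub a b) = p"
  unfolding Sub_def using G.generate_pow_card[OF gen_carrier] ord_gen by simp

lemma Sub_finite: "finite (Sub a b)"
  using Sub_subgroup finite_G by (meson rev_finite_subset subgroup.subset)

lemma Sub_scale: "nondeg a b \<Longrightarrow> \<not> p dvd c \<Longrightarrow> Sub (a * c) (b * c) = Sub a b"
proof -
  assume nd: "nondeg a b" and c: "\<not> p dvd c"
  have nd2: "nondeg (a * c) (b * c)" using nd c p_prime by (auto simp: nondeg_def prime_dvd_mult_iff)
  have "Sub (a * c) (b * c) \<subseteq> Sub a b"
    by (auto simp: Sub_eq mult.assoc)
  thus ?thesis using Sub_card[OF nd] Sub_card[OF nd2] Sub_finite by (simp add: card_subset_eq)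
qed

lemma Sub_cong: "[a = a'] (mod p) \<Longrightarrow> [b = b'] (mod p) \<Longrightarrow> Sub a b = Sub a' b'"
  unfolding Sub_def using gen_eq by metis


lemma cj_W_Sub: "cj W ` Sub a b = Sub b a"
proof -
  have "cj W (gen x y) = gen y x" for x y
    unfolding gen_def using e_range by (intro cj_W_dg) (auto intro: less_imp_le)
  thus ?thesis unfolding Sub_eq image_image by simp
qed

definition Idx :: "(nat \<times> nat) set" where "Idx = {(0,1),(1,1),(1,p-1)} \<union> (\<lambda>k. (1,k)) ` S"

lemma S_sub: "S \<subseteq> {2..p-2}" using S_reps by (simp add: inv_pair_reps_def)
lemma S_ex: "k \<in> {2..p-2} \<Longrightarrow> \<exists>l. l \<in> S \<and> (k = l \<or> [k * l = 1] (mod p))"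
  using S_reps unfolding inv_pair_reps_def by metis
lemma S_uniq: "k \<in> {2..p-2} \<Longrightarrow> l \<in> S \<Longrightarrow> (k = l \<or> [k * l = 1] (mod p)) \<Longrightarrow>
   l' \<in> S \<Longrightarrow> (k = l' \<or> [k * l' = 1] (mod p)) \<Longrightarrow> l = l'"
  using S_reps unfolding inv_pair_reps_def by metis

lemma Sub_carrier: "Sub a b \<subseteq> carrier G" using Sub_subgroup subgroup.subset by blast

lemma not_dvd_mod: "\<not> p dvd k \<Longrightarrow> \<not> p dvd (k mod p)"
  by (simp add: dvd_eq_mod_eq_0)

lemma to_rep1: "\<not> p dvd k \<Longrightarrow> \<exists>ab\<in>Idx. \<exists>y\<in>carrier G. cj y ` Sub 1 k = Sub (fst ab) (snd ab)"
proof -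
  assume k: "\<not> p dvd k"
  define k' where "k' = k mod p"
  have kk: "Sub 1 k = Sub 1 k'" unfolding k'_def by (rule Sub_cong) (simp_all add: cong_def)
  have k'p: "k' < p" "k' \<noteq> 0" using k p_gt2 by (auto simp: k'_def dvd_eq_mod_eq_0)
  show ?thesis
  proof (cases "k' = 1 \<or> k' = p - 1")
    case True
    hence "(1,k') \<in> Idx" by (auto simp: Idx_def)
    thus ?thesis using kk cj_one_set[OF Sub_carrier] by force
  next
    case False
    hence k2: "k' \<in> {2..p-2}" using k'p by auto
    then obtain l where l: "l \<in> S" "k' = l \<or> [k' * l = 1] (mod p)" using S_ex by blast
    have lI: "(1,l) \<in> Idx" using l by (auto simp: Idx_def)
    show ?thesis
    proof (cases "k' = l")
      case True thus ?thesis using kk lI cj_one_set[OF Sub_carrier] by force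
    next
      case False
      hence kl: "[k' * l = 1] (mod p)" using l by auto
      have "cj W ` Sub 1 k' = Sub k' 1" by (rule cj_W_Sub)
      also have "Sub k' 1 = Sub (1 * k') (l * k')" by (rule Sub_cong) (use kl in \<open>simp_all add: mult.commute cong_sym_eq\<close>)
      also have "\<dots> = Sub 1 l"
        by (rule Sub_scale) (use k'p in \<open>simp_all add: nondeg_def nat_dvd_not_less\<close>)
      finally show ?thesis using kk lI W_carrier by force
    qed
  qed
qed

lemma to_rep: "nondeg a b \<Longrightarrow> \<exists>ab\<in>Idx. \<exists>y\<in>carrier G. cj y ` Sub a b = Sub (fst ab) (snd ab)"
proof -
  assume nd: "nondeg a b"
  have I01: "(0,1) \<in> Idx" by (simp add: Idx_def)
  show ?thesis
  proof (cases "p dvd a")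
    case True
    hence b: "\<not> p dvd b" using nd by (simp add: nondeg_def)
    have "Sub a b = Sub (0 * b) (1 * b)" by (rule Sub_cong) (use True in \<open>simp_all add: cong_0_iff\<close>)
    also have "\<dots> = Sub 0 1" by (rule Sub_scale) (use b p_gt2 in \<open>simp_all add: nondeg_def\<close>)
    finally show ?thesis using I01 cj_one_set[OF Sub_carrier] by force
  next
    case False
    note a = False
    show ?thesis
    proof (cases "p dvd b")
      case True
      have "cj W ` Sub a b = Sub b a" by (rule cj_W_Sub)
      also have "\<dots> = Sub (0 * a) (1 * a)" by (rule Sub_cong) (use True in \<open>simp_all add: cong_0_iff\<close>)
      also have "\<dots> = Sub 0 1" by (rule Sub_scale) (use a p_gt2 in \<open>simp_all add: nondeg_def\<close>)
      finally show ?thesis using I01 W_carrier by force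
    next
      case False
      have "coprime a p" using a p_prime prime_imp_coprime coprime_commute by blast
      then obtain a' where a': "[a * a' = 1] (mod p)" using cong_solve_coprime_nat by fastforce
      define k where "k = b * a'"
      have "\<not> p dvd a'"
      proof
        assume "p dvd a'"
        hence "[a * a' = 0] (mod p)" by (simp add: cong_0_iff)
        hence "[0 = 1] (mod p)" using a' by (metis cong_sym cong_trans)
        thus False using p_prime prime_gt_1_nat[of p] by (simp add: cong_def)
      qed
      hence kp: "\<not> p dvd k" using False p_prime by (simp add: k_def prime_dvd_mult_iff)
      have "Sub a b = Sub (1 * a) (k * a)"
      proof (rule Sub_cong)
        have "[b * (a * a') = b * 1] (mod p)" using a' by (rule cong_scalar_left)
        thus "[b = k * a] (mod p)" by (simp add: k_def cong_sym_eq ac_simps)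
      qed simp
      also have "\<dots> = Sub 1 k" by (rule Sub_scale) (use a kp in \<open>simp_all add: nondeg_def\<close>)
      finally show ?thesis using to_rep1[OF kp] by simp
    qed
  qed
qed

end

context gl2q begin
lemma fermat_int: "x mod Q \<noteq> 0 \<Longrightarrow> (x ^ (q - 1)) mod Q = 1"
proof -
  assume x: "x mod Q \<noteq> 0"
  define n where "n = nat (x mod Q)"
  have xn: "x mod Q = int n" using Q_gt1 by (simp add: n_def)
  have "x mod Q < Q" using Q_gt1 by simp
  hence "n < q" using xn by linarith
  moreover have "n > 0" using x xn by simp
  ultimately have "\<not> q dvd n" by (simp add: nat_dvd_not_less)
  hence "[n ^ (q - 1) = 1] (mod q)" using q_prime by (intro fermat_theorem) auto
  hence "n ^ (q - 1) mod q = 1" using q_prime prime_gt_1_nat[of q] by (simp add: cong_def)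
  hence "int n ^ (q - 1) mod Q = 1" by (metis of_nat_1 of_nat_mod of_nat_power)
  thus ?thesis by (metis xn power_mod)
qed

lemma app_mult: "app Q (A \<otimes>\<^bsub>G\<^esub> B) v = app Q A (app Q B v)"
proof -
  obtain a b c d where A: "A = (a,b,c,d)" by (cases A) auto
  obtain e f g h where B: "B = (e,f,g,h)" by (cases B) auto
  obtain x y where v: "v = (x,y)" by (cases v) auto
  show ?thesis by (simp add: A B v mult_G mat2_mult_simp app_simp modL1 modL2) (simp add: algebra_simps)
qed

lemma app_one: "0 \<le> x \<Longrightarrow> x < Q \<Longrightarrow> 0 \<le> y \<Longrightarrow> y < Q \<Longrightarrow> app Q \<one>\<^bsub>G\<^esub> (x,y) = (x,y)"
  by (simp add: one_G app_simp)

lemma app_smul: "app Q M (smul Q c v) = smul Q c (app Q M v)"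
proof -
  obtain a b cc d where A: "M = (a,b,cc,d)" by (cases M) auto
  obtain x y where v: "v = (x,y)" by (cases v) auto
  show ?thesis by (simp add: A v app_simp smul_def modL2 mod_mult_right_eq) (simp add: algebra_simps)
qed

lemma app_red: "app Q M (red Q v) = app Q M v"
proof -
  obtain a b cc d where A: "M = (a,b,cc,d)" by (cases M) auto
  obtain x y where v: "v = (x,y)" by (cases v) auto
  show ?thesis by (simp add: A v app_simp red_def modL2)
qed

lemma red_app: "red Q (app Q M v) = app Q M v"
  by (cases M; cases v) (simp add: app_simp red_def)

lemma app_nz: "M \<in> carrier G \<Longrightarrow> nzv Q v \<Longrightarrow> nzv Q (app Q M v)"
proof -
  assume M: "M \<in> carrier G" and v: "nzv Q v"
  obtain a b c d where A: "M = (a,b,c,d)" by (cases M) auto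
  obtain x y where vv: "v = (x,y)" by (cases v) auto
  have D: "\<not> Q dvd (a * d - b * c)" using M by (simp add: A carrier_G mat2_det_simp dvd_eq_mod_eq_0)
  show ?thesis
  proof (rule ccontr)
    assume "\<not> nzv Q (app Q M v)"
    hence h: "Q dvd (a*x+b*y)" "Q dvd (c*x+d*y)" by (auto simp: nzv_def A vv app_simp dvd_eq_mod_eq_0)
    have "Q dvd (d*(a*x+b*y) - b*(c*x+d*y))" using h by simp
    moreover have "d*(a*x+b*y) - b*(c*x+d*y) = (a * d - b * c) * x" by (simp add: algebra_simps)
    ultimately have "Q dvd x" using D Q_prime by (simp add: prime_dvd_mult_iff)
    have "Q dvd (a*(c*x+d*y) - c*(a*x+b*y))" using h by simp
    moreover have "a*(c*x+d*y) - c*(a*x+b*y) = (a * d - b * c) * y" by (simp add: algebra_simps)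
    ultimately have "Q dvd y" using D Q_prime by (simp add: prime_dvd_mult_iff)
    show False using v \<open>Q dvd x\<close> \<open>Q dvd y\<close> by (simp add: nzv_def vv dvd_eq_mod_eq_0)
  qed
qed

lemma q_ge2: "q \<ge> 2" using q_prime prime_ge_2_nat by blast

lemma pow_split: "z ^ (q - 1) = z * z ^ (q - 2)" for z :: int
proof -
  obtain r where r: "q = r + 2" using q_ge2 by (metis le_add_diff_inverse2)
  show ?thesis by (simp add: r)
qed

lemma nrm_smul: "c mod Q \<noteq> 0 \<Longrightarrow> nzv Q v \<Longrightarrow> nrm Q (smul Q c v) = nrm Q v"
proof -
  assume c: "c mod Q \<noteq> 0" and v: "nzv Q v"
  obtain x y where vv: "v = (x,y)" by (cases v) auto
  show ?thesis
  proof (cases "x mod Q = 0")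
    case True
    hence "(c * x) mod Q = 0" by (simp add: mod_mult_right_eq[symmetric])
    thus ?thesis using True by (simp add: nrm_def smul_def vv)
  next
    case False
    have cx: "(c * x) mod Q \<noteq> 0" using prod_mod_nz[OF c False] .
    have nq: "nat Q - 2 = q - 2" by simp
    have "((c * y) mod Q * ((c * x) mod Q) ^ (q - 2)) mod Q = (c * y * (c * x) ^ (q - 2)) mod Q"
      by (metis mod_mult_left_eq mod_mult_right_eq power_mod)
    also have "c * y * (c * x) ^ (q - 2) = c ^ (q - 1) * (y * x ^ (q - 2))"
    proof -
      have "c ^ (q - 1) = c * c ^ (q - 2)" using pow_split by simp
      thus ?thesis unfolding power_mult_distrib by (simp only: ac_simps)
    qed
    also have "(c ^ (q - 1) * (y * x ^ (q - 2))) mod Q = (y * x ^ (q - 2)) mod Q"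
      using fermat_int[OF c] by (metis mod_mult_left_eq mult_1)
    finally show ?thesis using False cx by (simp add: nrm_def smul_def vv)
  qed
qed

lemma nrm_decomp: "nzv Q v \<Longrightarrow> \<exists>c. c mod Q \<noteq> 0 \<and> smul Q c (nrm Q v) = red Q v"
proof -
  assume v: "nzv Q v"
  obtain x y where vv: "v = (x,y)" by (cases v) auto
  show ?thesis
  proof (cases "x mod Q = 0")
    case True
    hence "y mod Q \<noteq> 0" using v by (simp add: nzv_def vv)
    thus ?thesis using True by (intro exI[of _ y]) (simp add: nrm_def smul_def red_def vv)
  next
    case False
    have "(x * ((y * x ^ (q - 2)) mod Q)) mod Q = (x ^ (q - 1) * y) mod Q"
    proof -
      have "x ^ (q - 1) = x * x ^ (q - 2)" using pow_split by simp
      hence "x * (y * x ^ (q - 2)) = x ^ (q - 1) * y" by (simp only: ac_simps)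
      thus ?thesis by (metis mod_mult_right_eq)
    qed
    also have "\<dots> = y mod Q" using fermat_int[OF False] by (metis mod_mult_left_eq mult_1)
    finally show ?thesis using False by (intro exI[of _ x]) (simp add: nrm_def smul_def red_def vv)
  qed
qed

lemma nrm_nz: "nzv Q (nrm Q v)"
  using Q_gt1 by (simp add: nrm_def nzv_def)

lemma nrm_app_nrm: "M \<in> carrier G \<Longrightarrow> nzv Q v \<Longrightarrow> nrm Q (app Q M (nrm Q v)) = nrm Q (app Q M v)"
proof -
  assume M: "M \<in> carrier G" and v: "nzv Q v"
  obtain c where c: "c mod Q \<noteq> 0" "smul Q c (nrm Q v) = red Q v" using nrm_decomp[OF v] by blast
  have "app Q M v = app Q M (red Q v)" by (simp add: app_red)
  also have "\<dots> = smul Q c (app Q M (nrm Q v))" by (simp add: c(2)[symmetric] app_smul)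
  finally have "nrm Q (app Q M v) = nrm Q (smul Q c (app Q M (nrm Q v)))" by simp
  also have "\<dots> = nrm Q (app Q M (nrm Q v))" using c(1) app_nz[OF M nrm_nz] by (rule nrm_smul)
  finally show ?thesis by simp
qed

lemma Xs_finite: "finite (Xs Q)" by (simp add: Xs_def)

lemma Xs_card: "card (Xs Q) = q + 1"
proof -
  have "card ((\<lambda>s. (1::int,s)) ` {0..<Q}) = q" by (subst card_image) (auto simp: inj_on_def)
  moreover have "(0,1) \<notin> (\<lambda>s. (1::int,s)) ` {0..<Q}" by auto
  ultimately show ?thesis by (simp add: Xs_def)
qed

lemma nrm_in: "nrm Q v \<in> Xs Q"
  using Q_gt1 by (auto simp: nrm_def Xs_def)

lemma Xs_props: "w \<in> Xs Q \<Longrightarrow> nrm Q w = w \<and> nzv Q w \<and> red Q w = w"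
  using Q_gt1 by (auto simp: Xs_def nrm_def nzv_def red_def)

end

lemma sq_one_mod: "Factorial_Ring.prime (p::nat) \<Longrightarrow> 2 \<le> k \<Longrightarrow> k + 1 < p \<Longrightarrow> [k * k = 1] (mod p) \<Longrightarrow> False"
proof -
  assume pr: "Factorial_Ring.prime p" and k: "2 \<le> k" "k + 1 < p" and c: "[k * k = 1] (mod p)"
  have "1 \<le> k * k" using k by (simp add: Suc_le_eq)
  hence "p dvd k * k - 1" using c cong_altdef_nat[of 1 "k * k" p] by simp
  moreover obtain j where j: "k = Suc j" using k by (cases k) auto
  have "k * k - 1 = (k - 1) * (k + 1)" by (simp add: j algebra_simps)
  ultimately have "p dvd (k - 1) * (k + 1)" by simp
  hence dd: "p dvd (k - 1) \<or> p dvd (k + 1)" using pr prime_dvd_mult_iff by blast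
  have a1: "0 < k - 1" using k by simp
  have a2: "k - 1 < p" using k by simp
  have a3: "0 < k + 1" by simp
  have n1: "\<not> p dvd (k - 1)" using nat_dvd_not_less[OF a1 a2] .
  have n2: "\<not> p dvd (k + 1)" using nat_dvd_not_less[OF a3 k(2)] .
  thus False using dd n1 n2 by simp
qed

context gsetup begin

lemma sub_p_gen: "subgroup H G \<Longrightarrow> card H = p \<Longrightarrow> \<exists>g\<in>H. g \<noteq> \<one>\<^bsub>G\<^esub> \<and> H = generate G {g}"
proof -
  assume sH: "subgroup H G" and cH: "card H = p"
  have p1: "p > 1" using p_gt2 by simp
  have fin: "finite H" by (rule card_ge_0_finite) (use cH p1 in simp)
  have one: "\<one>\<^bsub>G\<^esub> \<in> H" by (rule subgroup.one_closed[OF sH])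
  obtain g where g: "g \<in> H" "g \<noteq> \<one>\<^bsub>G\<^esub>"
  proof (rule ccontr)
    assume "\<not> thesis"
    hence "\<forall>g\<in>H. g = \<one>\<^bsub>G\<^esub>" using that by blast
    hence "H \<subseteq> {\<one>\<^bsub>G\<^esub>}" by blast
    hence "card H \<le> card {\<one>\<^bsub>G\<^esub>}" by (intro card_mono) auto
    hence "card H \<le> 1" by simp
    thus False using cH p1 by simp
  qed
  have gc: "g \<in> carrier G" by (rule subgroup.mem_carrier[OF sH g(1)])
  define K where "K = generate G {g}"
  have sK: "subgroup K G" unfolding K_def by (rule G.generate_is_subgroup) (use gc in simp)
  have KH: "K \<subseteq> H" unfolding K_def by (rule G.generate_subgroup_incl) (use g sH in simp_all)
  have sKH: "subgroup K (G\<lparr>carrier := H\<rparr>)" using G.subgroup_incl[OF sK sH KH] .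
  have grpH: "group (G\<lparr>carrier := H\<rparr>)" using G.subgroup_imp_group[OF sH] .
  have "card (rcosets\<^bsub>G\<lparr>carrier := H\<rparr>\<^esub> K) * card K = order (G\<lparr>carrier := H\<rparr>)"
    using group.lagrange[OF grpH sKH] .
  hence "card (rcosets\<^bsub>G\<lparr>carrier := H\<rparr>\<^esub> K) * card K = p" using cH by (simp add: order_def)
  hence "card K dvd p" by (metis dvd_triv_right)
  moreover have "card K \<noteq> 1"
  proof
    assume "card K = 1"
    moreover have "{\<one>\<^bsub>G\<^esub>, g} \<subseteq> K" unfolding K_def using gc
      by (auto intro: generate.one generate.incl)
    moreover have "finite K" using fin KH finite_subset by blast
    ultimately have "card {\<one>\<^bsub>G\<^esub>, g} \<le> 1" by (metis card_mono)
    thus False using g by simp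
  qed
  ultimately have "card K = p" using p_prime unfolding prime_nat_iff by blast
  hence "K = H" using KH fin cH by (simp add: card_subset_eq)
  thus ?thesis using g K_def by blast
qed

lemma Xs_det: "w1 \<in> Xs Q \<Longrightarrow> w2 \<in> Xs Q \<Longrightarrow> w1 \<noteq> w2 \<Longrightarrow>
   (fst w1 * snd w2 - fst w2 * snd w1) mod Q \<noteq> 0"
proof -
  assume w: "w1 \<in> Xs Q" "w2 \<in> Xs Q" "w1 \<noteq> w2"
  have small: "d mod Q \<noteq> 0" if "d \<noteq> 0" "-Q < d" "d < Q" for d
  proof
    assume "d mod Q = 0"
    hence "Q dvd d" by auto
    hence "\<bar>Q\<bar> \<le> \<bar>d\<bar>" using that(1) by (rule dvd_imp_le_int[rotated])
    thus False using that by auto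
  qed
  consider (a) s t where "w1 = (1,s)" "w2 = (1,t)" "0 \<le> s" "s < Q" "0 \<le> t" "t < Q"
    | (b) s where "w1 = (1,s)" "w2 = (0,1)"
    | (c) s where "w1 = (0,1)" "w2 = (1,s)"
    | (d) "w1 = (0,1)" "w2 = (0,1)"
    using w(1,2) by (auto simp: Xs_def)
  thus ?thesis
  proof cases
    case a
    hence "t - s \<noteq> 0" using w(3) by auto
    hence "(t - s) mod Q \<noteq> 0" using a by (intro small) auto
    thus ?thesis using a by simp
  next
    case b thus ?thesis using Q_gt1 by simp
  next
    case c thus ?thesis using Q_gt1 by (simp add: zmod_minus1)
  next
    case d thus ?thesis using w(3) by simp
  qed
qed

lemma diag_ex: "g \<in> carrier G \<Longrightarrow> g [^]\<^bsub>G\<^esub> p = \<one>\<^bsub>G\<^esub> \<Longrightarrow>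
  \<exists>P\<in>carrier G. \<exists>m1 m2. 0 < m1 \<and> m1 < Q \<and> 0 < m2 \<and> m2 < Q \<and>
     inv\<^bsub>G\<^esub> P \<otimes>\<^bsub>G\<^esub> g \<otimes>\<^bsub>G\<^esub> P = dg m1 m2"
proof -
  assume gc: "g \<in> carrier G" and gp: "g [^]\<^bsub>G\<^esub> p = \<one>\<^bsub>G\<^esub>"
  define \<sigma> where "\<sigma> w = nrm Q (app Q g w)" for w
  have app1: "app Q \<one>\<^bsub>G\<^esub> w = red Q w" for w by (cases w) (simp add: one_G app_simp red_def)
  have \<sigma>_in: "\<sigma> w \<in> Xs Q" for w unfolding \<sigma>_def by (rule nrm_in)
  have \<sigma>pow: "(\<sigma> ^^ n) w = nrm Q (app Q (g [^]\<^bsub>G\<^esub> n) w)" if w: "w \<in> Xs Q" for w n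
  proof (induction n)
    case 0 thus ?case using Xs_props[OF w] by (simp add: app1)
  next
    case (Suc n)
    have gn: "g [^]\<^bsub>G\<^esub> n \<in> carrier G" using gc by simp
    have nz: "nzv Q (app Q (g [^]\<^bsub>G\<^esub> n) w)" using app_nz[OF gn] Xs_props[OF w] by blast
    have "(\<sigma> ^^ Suc n) w = \<sigma> ((\<sigma> ^^ n) w)" by simp
    also have "\<dots> = \<sigma> (nrm Q (app Q (g [^]\<^bsub>G\<^esub> n) w))" using Suc.IH by simp
    also have "\<dots> = nrm Q (app Q g (nrm Q (app Q (g [^]\<^bsub>G\<^esub> n) w)))" by (simp add: \<sigma>_def)
    also have "\<dots> = nrm Q (app Q g (app Q (g [^]\<^bsub>G\<^esub> n) w))" using nrm_app_nrm[OF gc nz] .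
    also have "\<dots> = nrm Q (app Q (g [^]\<^bsub>G\<^esub> Suc n) w)"
      using gc by (simp only: G.nat_pow_Suc2 app_mult)
    finally show ?case .
  qed
  have per: "(\<sigma> ^^ p) w = w" if "w \<in> Xs Q" for w
    using \<sigma>pow[OF that, of p] gp Xs_props[OF that] by (simp add: app1)
  define F where "F = {w \<in> Xs Q. \<sigma> w = w}"
  have fc: "p dvd card (Xs Q) - card F"
    unfolding F_def by (rule fix_count[OF Xs_finite \<sigma>_in per p_prime])
  have FX: "F \<subseteq> Xs Q" by (auto simp: F_def)
  have finF: "finite F" using FX Xs_finite finite_subset by blast
  have two: "card F \<ge> 2"
  proof (rule ccontr)
    assume "\<not> card F \<ge> 2"
    hence c1: "card F \<le> 1" by simp
    have "p dvd q + 1 - card F" using fc Xs_card by simp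
    from dvd_diff_nat[OF this p_dvd] have "p dvd (q + 1 - card F) - (q - 1)" .
    moreover have "(q + 1 - card F) - (q - 1) = 2 - card F" using c1 q_ge2 by simp
    ultimately have "p dvd 2 - card F" by simp
    moreover have "2 - card F > 0" using c1 by simp
    ultimately have "p \<le> 2 - card F" by (simp add: dvd_imp_le)
    thus False using p_gt2 by simp
  qed
  have "F \<noteq> {}" using two by auto
  then obtain w1 where w1: "w1 \<in> F" by blast
  have "card (F - {w1}) \<ge> 1" using two w1 finF by simp
  hence "F - {w1} \<noteq> {}" by (metis card.empty not_one_le_zero)
  then obtain w2 where w2: "w2 \<in> F" "w2 \<noteq> w1" by blast
  have eig: "\<exists>m. 0 < m \<and> m < Q \<and> app Q g w = smul Q m w" if wF: "w \<in> F" for w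
  proof -
    have wX: "w \<in> Xs Q" and fx: "\<sigma> w = w" using wF by (auto simp: F_def)
    have nz: "nzv Q (app Q g w)" using app_nz[OF gc] Xs_props[OF wX] by blast
    obtain c where c: "c mod Q \<noteq> 0" "smul Q c (nrm Q (app Q g w)) = red Q (app Q g w)"
      using nrm_decomp[OF nz] by blast
    have "app Q g w = smul Q c w" using c(2) fx by (simp add: \<sigma>_def red_app)
    also have "\<dots> = smul Q (c mod Q) w" by (simp add: smul_def mod_mult_left_eq)
    moreover have "0 \<le> c mod Q" "c mod Q < Q" using Q_gt1 by auto
    ultimately show ?thesis using c(1) by (intro exI[of _ "c mod Q"]) simp
  qed
  obtain m1 where m1: "0 < m1" "m1 < Q" "app Q g w1 = smul Q m1 w1" using eig[OF w1] by blast
  obtain m2 where m2: "0 < m2" "m2 < Q" "app Q g w2 = smul Q m2 w2" using eig[OF w2(1)] by blast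
  obtain x1 y1 where W1: "w1 = (x1,y1)" by (cases w1) auto
  obtain x2 y2 where W2: "w2 = (x2,y2)" by (cases w2) auto
  define P where "P = (x1, x2, y1, y2)"
  have w1X: "w1 \<in> Xs Q" and w2X: "w2 \<in> Xs Q" using w1 w2 by (auto simp: F_def)
  have Pc: "P \<in> carrier G"
  proof -
    have ne: "w1 \<noteq> w2" using w2(2) by simp
    have "(x1 * y2 - x2 * y1) mod Q \<noteq> 0" using Xs_det[OF w1X w2X ne] by (simp add: W1 W2)
    moreover have "mat2_entries_in Q P" using w1X w2X Q_gt1 by (auto simp: P_def W1 W2 Xs_def mat2_entries_in_def)
    ultimately show ?thesis by (simp add: carrier_G P_def mat2_det_simp)
  qed
  have D: "dg m1 m2 \<in> carrier G" by (rule dg_carrier[OF m1(1) m1(2) m2(1) m2(2)])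
  have gP: "g \<otimes>\<^bsub>G\<^esub> P = P \<otimes>\<^bsub>G\<^esub> dg m1 m2"
  proof -
    obtain a b c d where g4: "g = (a,b,c,d)" by (cases g) auto
    show ?thesis using m1(3) m2(3)
      by (simp add: g4 W1 W2 P_def dg_def mult_G mat2_mult_simp app_simp smul_def mult.commute)
  qed
  have "inv\<^bsub>G\<^esub> P \<otimes>\<^bsub>G\<^esub> g \<otimes>\<^bsub>G\<^esub> P = inv\<^bsub>G\<^esub> P \<otimes>\<^bsub>G\<^esub> (g \<otimes>\<^bsub>G\<^esub> P)"
    using Pc gc by (simp add: G.m_assoc)
  also have "\<dots> = dg m1 m2" using Pc D by (simp add: gP inv_cancel)
  finally show ?thesis using Pc m1 m2 by blast
qed


lemma classify: "subgroup H G \<Longrightarrow> card H = p \<Longrightarrow> \<exists>x\<in>carrier G. \<exists>a b. nondeg a b \<and> cj x ` H = Sub a b"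
proof -
  assume sH: "subgroup H G" and cH: "card H = p"
  obtain g where g: "g \<in> H" "g \<noteq> \<one>\<^bsub>G\<^esub>" "H = generate G {g}" using sub_p_gen[OF sH cH] by blast
  have gc: "g \<in> carrier G" by (rule subgroup.mem_carrier[OF sH g(1)])
  have ordg: "group.ord G g = p" using G.generate_pow_card[OF gc] g(3) cH by simp
  have gp: "g [^]\<^bsub>G\<^esub> p = \<one>\<^bsub>G\<^esub>" using G.pow_eq_id[OF gc, of p] ordg by simp
  obtain P m1 m2 where P: "P \<in> carrier G" "0 < m1" "m1 < Q" "0 < m2" "m2 < Q"
      "inv\<^bsub>G\<^esub> P \<otimes>\<^bsub>G\<^esub> g \<otimes>\<^bsub>G\<^esub> P = dg m1 m2"
    using diag_ex[OF gc gp] by blast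
  define x where "x = inv\<^bsub>G\<^esub> P"
  have xc: "x \<in> carrier G" using P(1) by (simp add: x_def)
  have cjg: "cj x g = dg m1 m2" using P(1) P(6) by (simp add: cj_def x_def)
  have one1: "cj x \<one>\<^bsub>G\<^esub> = \<one>\<^bsub>G\<^esub>" using xc by (simp add: cj_def)
  have "dg m1 m2 [^]\<^bsub>G\<^esub> p = \<one>\<^bsub>G\<^esub>"
    using cj_pow[OF xc gc, of p] gp cjg one1 by simp
  hence "dg (m1 ^ p mod Q) (m2 ^ p mod Q) = (1,0,0,1)"
    using dg_pow[of m1 m2 p] P(2-5) by (simp add: one_G)
  hence mp: "m1 ^ p mod Q = 1" "m2 ^ p mod Q = 1" by (simp_all add: dg_def)
  obtain a where a: "m1 = e a" using roots_int[OF P(2) P(3) mp(1)] by blast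
  obtain b where b: "m2 = e b" using roots_int[OF P(4) P(5) mp(2)] by blast
  have cg: "cj x g = gen a b" using cjg a b by (simp add: gen_def)
  have nd: "nondeg a b"
  proof (rule ccontr)
    assume "\<not> nondeg a b"
    hence "gen a b = gen 0 0" by (simp add: nondeg_def gen_eq cong_0_iff)
    hence c1: "cj x g = \<one>\<^bsub>G\<^esub>" using cg gen_one by simp
    have "g = cj P (cj x g)" using cj_comp1[OF P(1) xc gc] P(1) gc by (simp add: x_def cj_def)
    also have "\<dots> = \<one>\<^bsub>G\<^esub>" using c1 P(1) by (simp add: cj_def)
    finally show False using g(2) by simp
  qed
  have R: "\<And>z. {z [^]\<^bsub>G\<^esub> k | k. k \<in> (UNIV :: nat set)} = range (\<lambda>k::nat. z [^]\<^bsub>G\<^esub> k)" by blast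
  have H2: "H = range (\<lambda>k::nat. g [^]\<^bsub>G\<^esub> k)"
    by (simp only: g(3) G.generate_pow_on_finite_carrier[OF finite_G gc] R)
  have S2: "Sub a b = range (\<lambda>k::nat. gen a b [^]\<^bsub>G\<^esub> k)"
    by (simp only: Sub_def G.generate_pow_on_finite_carrier[OF finite_G gen_carrier] R)
  have "cj x ` H = range (\<lambda>k::nat. cj x (g [^]\<^bsub>G\<^esub> k))" unfolding H2 by (simp only: image_image)
  also have "\<dots> = range (\<lambda>k::nat. gen a b [^]\<^bsub>G\<^esub> k)" by (simp only: cj_pow[OF xc gc] cg)
  finally have "cj x ` H = Sub a b" using S2 by simp
  thus ?thesis using xc nd by blast
qed

definition tr :: "mat2 \<Rightarrow> int" where "tr M = (case M of (a,b,c,d) \<Rightarrow> a + d)"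

lemma tr_swap: "tr (mat2_mult Q A B) mod Q = tr (mat2_mult Q B A) mod Q"
proof -
  obtain a b c d where A: "A = (a,b,c,d)" by (cases A) auto
  obtain e f g h where B: "B = (e,f,g,h)" by (cases B) auto
  have "tr (mat2_mult Q A B) mod Q = (a * e + b * g + (c * f + d * h)) mod Q"
    by (simp add: A B tr_def mat2_mult_simp mod_add_eq)
  also have "\<dots> = (e * a + f * c + (g * b + h * d)) mod Q" by (simp add: algebra_simps)
  also have "\<dots> = tr (mat2_mult Q B A) mod Q"
    by (simp add: A B tr_def mat2_mult_simp mod_add_eq)
  finally show ?thesis .
qed

lemma det_swap: "mat2_det (mat2_mult Q A B) mod Q = mat2_det (mat2_mult Q B A) mod Q"
  by (simp add: det_mult_mod mult.commute)

lemma cj_tr: "x \<in> carrier G \<Longrightarrow> M \<in> carrier G \<Longrightarrow> tr (cj x M) mod Q = tr M mod Q"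
proof -
  assume xc: "x \<in> carrier G" and M: "M \<in> carrier G"
  have "tr (cj x M) mod Q = tr (mat2_mult Q (x \<otimes>\<^bsub>G\<^esub> M) (inv\<^bsub>G\<^esub> x)) mod Q" by (simp add: cj_def mult_G)
  also have "\<dots> = tr (mat2_mult Q (inv\<^bsub>G\<^esub> x) (x \<otimes>\<^bsub>G\<^esub> M)) mod Q" by (rule tr_swap)
  also have "mat2_mult Q (inv\<^bsub>G\<^esub> x) (x \<otimes>\<^bsub>G\<^esub> M) = M" using inv_cancel[OF xc M] by (simp add: mult_G)
  finally show ?thesis .
qed

lemma cj_det: "x \<in> carrier G \<Longrightarrow> M \<in> carrier G \<Longrightarrow> mat2_det (cj x M) mod Q = mat2_det M mod Q"
proof -
  assume xc: "x \<in> carrier G" and M: "M \<in> carrier G"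
  have "mat2_det (cj x M) mod Q = mat2_det (mat2_mult Q (x \<otimes>\<^bsub>G\<^esub> M) (inv\<^bsub>G\<^esub> x)) mod Q" by (simp add: cj_def mult_G)
  also have "\<dots> = mat2_det (mat2_mult Q (inv\<^bsub>G\<^esub> x) (x \<otimes>\<^bsub>G\<^esub> M)) mod Q" by (rule det_swap)
  also have "mat2_det (mat2_mult Q (inv\<^bsub>G\<^esub> x) (x \<otimes>\<^bsub>G\<^esub> M)) = mat2_det M" using inv_cancel[OF xc M] by (simp add: mult_G)
  finally show ?thesis .
qed

lemma pair_eq: "(x + y) mod Q = (u + v) mod Q \<Longrightarrow> (x * y) mod Q = (u * v) mod Q \<Longrightarrow>
  (x mod Q = u mod Q \<and> y mod Q = v mod Q) \<or> (x mod Q = v mod Q \<and> y mod Q = u mod Q)"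
proof -
  assume s: "(x + y) mod Q = (u + v) mod Q" and m: "(x * y) mod Q = (u * v) mod Q"
  have "Q dvd (x + y) - (u + v)" using s by (simp only: mod_eq_dvd_iff)
  hence s': "Q dvd (x + y - u - v)" by (simp add: algebra_simps)
  have m': "Q dvd (x * y - u * v)" using m by (simp add: mod_eq_dvd_iff)
  have "(x - u) * (x - v) = x * (x + y - u - v) - (x * y - u * v)" by (simp add: algebra_simps)
  hence "Q dvd (x - u) * (x - v)" using s' m' by simp
  hence "Q dvd (x - u) \<or> Q dvd (x - v)" using Q_prime by (simp add: prime_dvd_mult_iff)
  thus ?thesis
  proof
    assume h: "Q dvd (x - u)"
    have "y - v = (x + y - u - v) - (x - u)" by simp
    hence "Q dvd (y - v)" using s' h by (metis dvd_diff)
    thus ?thesis using h by (simp add: mod_eq_dvd_iff)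
  next
    assume h: "Q dvd (x - v)"
    have "y - u = (x + y - u - v) - (x - v)" by simp
    hence "Q dvd (y - u)" using s' h by (metis dvd_diff)
    thus ?thesis using h by (simp add: mod_eq_dvd_iff)
  qed
qed


lemma gen_in_Sub: "gen a b \<in> Sub a b"
proof -
  have "gen (a * 1) (b * 1) \<in> range (\<lambda>k. gen (a * k) (b * k))" by (rule rangeI)
  thus ?thesis by (simp add: Sub_eq)
qed

lemma e_mod: "e k mod Q = e k" using e_range[of k] by simp

lemma conj_cong: "conj_subgroups G (Sub a b) (Sub a' b') \<Longrightarrow>
  \<exists>k. ([a = a' * k] (mod p) \<and> [b = b' * k] (mod p)) \<or> ([a = b' * k] (mod p) \<and> [b = a' * k] (mod p))"
proof -
  assume "conj_subgroups G (Sub a b) (Sub a' b')"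
  then obtain x where xc: "x \<in> carrier G" and K: "Sub a' b' = cj x ` Sub a b" by (auto simp: conj_iff)
  have "cj x (gen a b) \<in> Sub a' b'" using K gen_in_Sub by blast
  then obtain k where k: "cj x (gen a b) = gen (a' * k) (b' * k)" by (auto simp: Sub_eq)
  have t: "tr (gen a b) mod Q = tr (gen (a' * k) (b' * k)) mod Q"
    using cj_tr[OF xc gen_carrier[of a b]] k by simp
  have d: "mat2_det (gen a b) mod Q = mat2_det (gen (a' * k) (b' * k)) mod Q"
    using cj_det[OF xc gen_carrier[of a b]] k by simp
  have "(e a mod Q = e (a' * k) mod Q \<and> e b mod Q = e (b' * k) mod Q) \<or>
        (e a mod Q = e (b' * k) mod Q \<and> e b mod Q = e (a' * k) mod Q)"
    using t d by (intro pair_eq) (simp_all add: gen_def dg_def tr_def mat2_det_simp)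
  hence "(e a = e (a' * k) \<and> e b = e (b' * k)) \<or> (e a = e (b' * k) \<and> e b = e (a' * k))"
    by (simp only: e_mod)
  thus ?thesis by (auto simp: e_eq_iff)
qed

definition Bset :: "nat set" where "Bset = {1, p - 1} \<union> S"

lemma Idx_alt: "Idx = {(0,1)} \<union> (\<lambda>k. (1,k)) ` Bset"
  by (auto simp: Idx_def Bset_def)

lemma B_range: "\<beta> \<in> Bset \<Longrightarrow> 1 \<le> \<beta> \<and> \<beta> < p"
proof -
  assume "\<beta> \<in> Bset"
  hence "\<beta> \<in> {1, p - 1} \<or> \<beta> \<in> {2..p-2}" using S_sub by (auto simp: Bset_def)
  thus ?thesis using p_gt2 by auto
qed

lemma inv_unique_p: "[x * y = 1] (mod p) \<Longrightarrow> [y * y = 1] (mod p) \<Longrightarrow> [x = y] (mod p)"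
proof -
  assume xy: "[x * y = 1] (mod p)" and yy: "[y * y = 1] (mod p)"
  have "[x * (y * y) = x * 1] (mod p)" using yy by (rule cong_scalar_left)
  hence "[x = x * (y * y)] (mod p)" by (simp add: cong_sym_eq)
  moreover have "[(x * y) * y = 1 * y] (mod p)" using xy by (rule cong_scalar_right)
  ultimately show ?thesis by (simp add: mult.assoc cong_trans)
qed

lemma sq_pm1: "\<beta> \<in> {1, p - 1} \<Longrightarrow> [\<beta> * \<beta> = 1] (mod p)"
proof -
  assume "\<beta> \<in> {1, p - 1}"
  moreover have "[(p - 1) * (p - 1) = 1] (mod p)"
  proof -
    obtain r where r: "p = r + 2" using p_gt2 by (metis le_add_diff_inverse2 less_imp_le_nat)
    have e1: "(p - 1) * (p - 1) = 1 + p * r" by (simp add: r algebra_simps)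
    have "[p * r = 0] (mod p)" by (simp add: cong_0_iff)
    hence "[1 + p * r = 1 + 0] (mod p)" by (intro cong_add) auto
    thus ?thesis by (subst e1) simp
  qed
  ultimately show ?thesis by auto
qed

lemma not_cong0: "1 \<le> \<beta> \<Longrightarrow> \<beta> < p \<Longrightarrow> \<not> [\<beta> = 0] (mod p)"
  by (simp add: cong_0_iff nat_dvd_not_less)

lemma not_cong10: "\<not> [1 = 0] (mod p)"
  using p_gt2 by (simp add: cong_def)

lemma nt: "\<beta> \<in> Bset \<Longrightarrow> \<beta>' \<in> Bset \<Longrightarrow> [\<beta> * \<beta>' = 1] (mod p) \<Longrightarrow> \<beta> = \<beta>'"
proof -
  assume b: "\<beta> \<in> Bset" and b': "\<beta>' \<in> Bset" and bb: "[\<beta> * \<beta>' = 1] (mod p)"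
  have r: "\<beta> < p" "\<beta>' < p" using B_range b b' by auto
  show ?thesis
  proof (cases "\<beta> \<in> {1, p - 1}")
    case True
    have "[\<beta>' * \<beta> = 1] (mod p)" using bb by (simp add: mult.commute)
    hence "[\<beta>' = \<beta>] (mod p)" using sq_pm1[OF True] by (rule inv_unique_p)
    thus ?thesis using r by (metis cong_less_modulus_unique_nat)
  next
    case F1: False
    show ?thesis
    proof (cases "\<beta>' \<in> {1, p - 1}")
      case True
      have "[\<beta> = \<beta>'] (mod p)" using bb sq_pm1[OF True] by (rule inv_unique_p)
      thus ?thesis using r by (metis cong_less_modulus_unique_nat)
    next
      case False
      have bS: "\<beta> \<in> S" and bS': "\<beta>' \<in> S" using F1 False b b' by (auto simp: Bset_def)
      have bT: "\<beta> \<in> {2..p-2}" using bS S_sub by auto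
      show ?thesis using S_uniq[OF bT bS _ bS'] bb by blast
    qed
  qed
qed

lemma dist: "ab \<in> Idx \<Longrightarrow> ab' \<in> Idx \<Longrightarrow>
   conj_subgroups G (Sub (fst ab) (snd ab)) (Sub (fst ab') (snd ab')) \<Longrightarrow> ab = ab'"
proof -
  assume i: "ab \<in> Idx" "ab' \<in> Idx" and c: "conj_subgroups G (Sub (fst ab) (snd ab)) (Sub (fst ab') (snd ab'))"
  obtain k where k: "([fst ab = fst ab' * k] (mod p) \<and> [snd ab = snd ab' * k] (mod p)) \<or>
     ([fst ab = snd ab' * k] (mod p) \<and> [snd ab = fst ab' * k] (mod p))"
    using conj_cong[OF c] by blast
  consider (a) "ab = (0,1)" | (b) \<beta> where "ab = (1,\<beta>)" "\<beta> \<in> Bset" using i(1) by (auto simp: Idx_alt)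
  note cA = this
  consider (a) "ab' = (0,1)" | (b) \<beta>' where "ab' = (1,\<beta>')" "\<beta>' \<in> Bset" using i(2) by (auto simp: Idx_alt)
  note cB = this
  show ?thesis
  proof (cases rule: cA)
    case a
    show ?thesis
    proof (cases rule: cB)
      case a thus ?thesis using \<open>ab = (0,1)\<close> by simp
    next
      case (b \<beta>')
      have r: "1 \<le> \<beta>'" "\<beta>' < p" using B_range[OF b(2)] by auto
      from k consider "[0 = k] (mod p)" "[1 = \<beta>' * k] (mod p)" | "[0 = \<beta>' * k] (mod p)" "[1 = k] (mod p)"
        using a b by auto
      thus ?thesis
      proof cases
        case 1
        have "[\<beta>' * k = \<beta>' * 0] (mod p)" using 1(1) by (intro cong_scalar_left) (simp add: cong_sym_eq)
        hence "[1 = 0] (mod p)" using 1(2) by (simp add: cong_trans)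
        thus ?thesis using not_cong10 by blast
      next
        case 2
        have "[\<beta>' * k = \<beta>' * 1] (mod p)" using 2(2) by (intro cong_scalar_left) (simp add: cong_sym_eq)
        hence "[\<beta>' = 0] (mod p)" using 2(1) by (metis cong_sym cong_trans mult_1_right)
        thus ?thesis using not_cong0 r by blast
      qed
    qed
  next
    case (b \<beta>)
    have r: "1 \<le> \<beta>" "\<beta> < p" using B_range[OF b(2)] by auto
    show ?thesis
    proof (cases rule: cB)
      case a
      from k consider "[1 = 0] (mod p)" | "[\<beta> = 0] (mod p)"
        using a b by auto
      thus ?thesis using not_cong10 not_cong0 r by (cases) blast+
    next
      case (b \<beta>')
      note bb = b
      have r': "\<beta>' < p" using B_range[OF b(2)] by auto
      from k consider "[1 = k] (mod p)" "[\<beta> = \<beta>' * k] (mod p)" | "[1 = \<beta>' * k] (mod p)" "[\<beta> = k] (mod p)"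
        using \<open>ab = (1,\<beta>)\<close> bb(1) by auto
      thus ?thesis
      proof cases
        case 1
        have "[\<beta>' * k = \<beta>' * 1] (mod p)" using 1(1) by (intro cong_scalar_left) (simp add: cong_sym_eq)
        hence "[\<beta> = \<beta>'] (mod p)" using 1(2) by (metis cong_trans mult_1_right)
        hence "\<beta> = \<beta>'" using r r' by (metis cong_less_modulus_unique_nat)
        thus ?thesis using \<open>ab = (1,\<beta>)\<close> bb(1) by simp
      next
        case 2
        have "[\<beta>' * \<beta> = \<beta>' * k] (mod p)" using 2(2) by (rule cong_scalar_left)
        hence "[\<beta>' * \<beta> = 1] (mod p)" using 2(1) by (metis cong_sym cong_trans)
        hence "[\<beta> * \<beta>' = 1] (mod p)" by (simp add: mult.commute)
        hence "\<beta> = \<beta>'" using nt \<open>\<beta> \<in> Bset\<close> bb(2) by blast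
        thus ?thesis using \<open>ab = (1,\<beta>)\<close> bb(1) by simp
      qed
    qed
  qed
qed


definition \<iota> :: "nat \<Rightarrow> nat" where "\<iota> k = k ^ (p - 2) mod p"

lemma inv_uniq2: "[l * k = 1] (mod p) \<Longrightarrow> [k * m = 1] (mod p) \<Longrightarrow> [l = m] (mod p)"
proof -
  assume lk: "[l * k = 1] (mod p)" and km: "[k * m = 1] (mod p)"
  have "[l * (k * m) = l * 1] (mod p)" using km by (rule cong_scalar_left)
  hence "[l = l * (k * m)] (mod p)" by (simp add: cong_sym_eq)
  moreover have "[(l * k) * m = 1 * m] (mod p)" using lk by (rule cong_scalar_right)
  ultimately show ?thesis by (simp add: mult.assoc cong_trans)
qed

lemma iota_inv: "k \<in> {2..p-2} \<Longrightarrow> [k * \<iota> k = 1] (mod p)"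
proof -
  assume k: "k \<in> {2..p-2}"
  have "\<not> p dvd k" using k p_gt2 by (auto simp: nat_dvd_not_less)
  hence f: "[k ^ (p - 1) = 1] (mod p)" using p_prime by (intro fermat_theorem) auto
  obtain r where r: "p = r + 2" using p_gt2 by (metis le_add_diff_inverse2 less_imp_le_nat)
  have "k * k ^ (p - 2) = k ^ (p - 1)" by (simp add: r)
  moreover have "[k * \<iota> k = k * k ^ (p - 2)] (mod p)" unfolding \<iota>_def
    by (simp add: cong_def mod_mult_right_eq)
  ultimately show ?thesis using f by (metis cong_trans)
qed

lemma iota_T: "k \<in> {2..p-2} \<Longrightarrow> \<iota> k \<in> {2..p-2}"
proof -
  assume k: "k \<in> {2..p-2}"
  have "k \<le> p - 2" using k by simp
  hence kp: "k < p" using p_gt2 by linarith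
  have i: "[k * \<iota> k = 1] (mod p)" using iota_inv[OF k] .
  have lt: "\<iota> k < p" unfolding \<iota>_def using p_gt2 by simp
  have n0: "\<iota> k \<noteq> 0"
  proof
    assume "\<iota> k = 0"
    hence "[0 = 1] (mod p)" using i by simp
    thus False using not_cong10 cong_sym by blast
  qed
  have n1: "\<iota> k \<noteq> 1"
  proof
    assume "\<iota> k = 1"
    hence "[k = 1] (mod p)" using i by simp
    hence "k = 1" using kp p_gt2 cong_less_modulus_unique_nat[of k 1 p] by simp
    thus False using k by simp
  qed
  have n2: "\<iota> k \<noteq> p - 1"
  proof
    assume "\<iota> k = p - 1"
    hence "[k * (p - 1) = 1] (mod p)" using i by simp
    moreover have "[(p - 1) * (p - 1) = 1] (mod p)" by (rule sq_pm1) simp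
    ultimately have "[k = p - 1] (mod p)" by (rule inv_unique_p)
    hence "k = p - 1" using kp p_gt2 cong_less_modulus_unique_nat[of k "p - 1" p] by simp
    thus False using k p_gt2 by auto
  qed
  have "2 \<le> \<iota> k" using n0 n1 by linarith
  moreover have "\<iota> k \<le> p - 2" using lt n2 by linarith
  ultimately show ?thesis by simp
qed

lemma iota_neq: "k \<in> {2..p-2} \<Longrightarrow> \<iota> k \<noteq> k"
proof
  assume k: "k \<in> {2..p-2}" and e: "\<iota> k = k"
  have c: "[k * k = 1] (mod p)" using iota_inv[OF k] e by simp
  have k2: "2 \<le> k" "k \<le> p - 2" using k by simp_all
  hence "k + 1 < p" using p_gt2 by linarith
  thus False using sq_one_mod[OF p_prime k2(1) _ c] by simp
qed

lemma card_S: "card {2..p-2} = 2 * card S"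
proof -
  let ?T = "{2..p-2}"
  have ST: "S \<subseteq> ?T" by (rule S_sub)
  have finS: "finite S" using ST finite_subset by blast
  have cong_eq: "[a = b] (mod p) \<Longrightarrow> a \<in> ?T \<Longrightarrow> b \<in> ?T \<Longrightarrow> a = b" for a b
  proof -
    assume "[a = b] (mod p)" "a \<in> ?T" "b \<in> ?T"
    moreover have "a < p" "b < p" using \<open>a \<in> ?T\<close> \<open>b \<in> ?T\<close> p_gt2 by auto
    ultimately show "a = b" using cong_less_modulus_unique_nat by blast
  qed
  have eq: "?T = S \<union> \<iota> ` S"
  proof
    show "?T \<subseteq> S \<union> \<iota> ` S"
    proof
      fix k assume k: "k \<in> ?T"
      then obtain l where l: "l \<in> S" "k = l \<or> [k * l = 1] (mod p)" using S_ex by blast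
      show "k \<in> S \<union> \<iota> ` S"
      proof (cases "k = l")
        case True thus ?thesis using l by simp
      next
        case False
        hence kl: "[k * l = 1] (mod p)" using l by simp
        have lT: "l \<in> ?T" using l ST by auto
        have "[k = \<iota> l] (mod p)" using kl iota_inv[OF lT] by (rule inv_uniq2)
        hence "k = \<iota> l" using cong_eq k iota_T[OF lT] by blast
        thus ?thesis using l by blast
      qed
    qed
    show "S \<union> \<iota> ` S \<subseteq> ?T" using ST iota_T by auto
  qed
  have disj: "S \<inter> \<iota> ` S = {}"
  proof (rule ccontr)
    assume "S \<inter> \<iota> ` S \<noteq> {}"
    then obtain l l' where l: "l \<in> S" "l' \<in> S" "l = \<iota> l'" by blast
    have lT: "l \<in> ?T" "l' \<in> ?T" using l ST by auto
    have "[l' * \<iota> l' = 1] (mod p)" using iota_inv[OF lT(2)] .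
    hence "[l * l' = 1] (mod p)" using l(3) by (simp add: mult.commute)
    hence "l = l'" using S_uniq[OF lT(1) l(1) _ l(2)] by blast
    thus False using iota_neq[OF lT(2)] l(3) by simp
  qed
  have inj: "inj_on \<iota> S"
  proof (rule inj_onI)
    fix k k' assume k: "k \<in> S" "k' \<in> S" "\<iota> k = \<iota> k'"
    have kT: "k \<in> ?T" "k' \<in> ?T" using k ST by auto
    have "[k * \<iota> k = 1] (mod p)" using iota_inv[OF kT(1)] .
    moreover have "[\<iota> k * k' = 1] (mod p)" using iota_inv[OF kT(2)] k(3) by (simp add: mult.commute)
    ultimately have "[k = k'] (mod p)" by (rule inv_uniq2)
    thus "k = k'" using cong_eq kT by blast
  qed
  have "card ?T = card S + card (\<iota> ` S)" unfolding eq using finS disj by (simp add: card_Un_disjoint)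
  also have "card (\<iota> ` S) = card S" using inj by (simp add: card_image)
  finally show ?thesis by simp
qed

lemma card_S2: "(p + 3) div 2 = card S + 3"
proof -
  have "card {2..p-2} = p - 3" using p_gt2 by simp
  hence "p - 3 = 2 * card S" using card_S by simp
  hence "p + 3 = 2 * (card S + 3)" using p_gt2 by simp
  thus ?thesis by simp
qed

lemma card_Idx: "card Idx = card S + 3"
proof -
  have "1 \<notin> {2..p-2}" "p - 1 \<notin> {2..p-2}" using p_gt2 by (simp, simp, linarith)
  hence S1: "1 \<notin> S" "p - 1 \<notin> S" using S_sub by blast+
  have fin: "finite S" using S_sub finite_subset by blast
  have d: "{(0::nat,1::nat),(1,1),(1,p-1)} \<inter> (\<lambda>k. (1::nat,k)) ` S = {}" using S1 by auto
  have c3: "card {(0::nat,1::nat),(1,1),(1,p-1)} = 3" using p_gt2 by simp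
  have ci: "card ((\<lambda>k. (1::nat,k)) ` S) = card S" by (simp add: card_image inj_on_def)
  have "card ({(0::nat,1::nat),(1,1),(1,p-1)} \<union> (\<lambda>k. (1::nat,k)) ` S) =
      card {(0::nat,1::nat),(1,1),(1,p-1)} + card ((\<lambda>k. (1::nat,k)) ` S)"
    by (rule card_Un_disjoint) (use d fin in simp_all)
  thus ?thesis unfolding Idx_def by (simp only: c3 ci)
qed

lemma Idx_nondeg: "ab \<in> Idx \<Longrightarrow> nondeg (fst ab) (snd ab)"
  using p_gt2 by (auto simp: Idx_def nondeg_def)

definition Rset :: "mat2 set set" where "Rset = (\<lambda>ab. Sub (fst ab) (snd ab)) ` Idx"

lemma conj_refl: "H \<subseteq> carrier G \<Longrightarrow> conj_subgroups G H H"
  unfolding conj_iff using cj_one_set by (metis G.one_closed)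

lemma conj_sym: "H \<subseteq> carrier G \<Longrightarrow> conj_subgroups G H K \<Longrightarrow> conj_subgroups G K H"
proof -
  assume H: "H \<subseteq> carrier G" and "conj_subgroups G H K"
  then obtain x where x: "x \<in> carrier G" "K = cj x ` H" by (auto simp: conj_iff)
  have "cj (inv\<^bsub>G\<^esub> x) ` K = cj (inv\<^bsub>G\<^esub> x \<otimes>\<^bsub>G\<^esub> x) ` H" unfolding x(2) using x(1) H by (intro cj_comp) auto
  also have "\<dots> = H" using x(1) H by (simp add: cj_one_set)
  finally show ?thesis unfolding conj_iff using x(1) by (metis G.inv_closed)
qed

lemma conj_sub: "H \<subseteq> carrier G \<Longrightarrow> conj_subgroups G H K \<Longrightarrow> K \<subseteq> carrier G"
  unfolding conj_iff using cj_carrier by blast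

lemma conj_trans: "H \<subseteq> carrier G \<Longrightarrow> conj_subgroups G H K \<Longrightarrow> conj_subgroups G K L \<Longrightarrow> conj_subgroups G H L"
proof -
  assume H: "H \<subseteq> carrier G" and "conj_subgroups G H K" "conj_subgroups G K L"
  then obtain x y where x: "x \<in> carrier G" "K = cj x ` H" and y: "y \<in> carrier G" "L = cj y ` K"
    by (auto simp: conj_iff)
  have "L = cj (y \<otimes>\<^bsub>G\<^esub> x) ` H" unfolding y(2) x(2) by (rule cj_comp[OF y(1) x(1) H])
  thus ?thesis unfolding conj_iff using x(1) y(1) by (metis G.m_closed)
qed

lemma Rset_props: "K \<in> Rset \<Longrightarrow> subgroup K G \<and> card K = p"
  unfolding Rset_def using Sub_subgroup Sub_card Idx_nondeg by auto

lemma Rset_complete: "subgroup H G \<Longrightarrow> card H = p \<Longrightarrow> \<exists>K\<in>Rset. conj_subgroups G H K"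
proof -
  assume sH: "subgroup H G" and cH: "card H = p"
  have Hc: "H \<subseteq> carrier G" using sH subgroup.subset by blast
  obtain x a b where x: "x \<in> carrier G" "nondeg a b" "cj x ` H = Sub a b" using classify[OF sH cH] by blast
  obtain ab y where ab: "ab \<in> Idx" "y \<in> carrier G" "cj y ` Sub a b = Sub (fst ab) (snd ab)"
    using to_rep[OF x(2)] by blast
  have "Sub (fst ab) (snd ab) = cj (y \<otimes>\<^bsub>G\<^esub> x) ` H"
    using ab(3) x(3) cj_comp[OF ab(2) x(1) Hc] by simp
  moreover have "y \<otimes>\<^bsub>G\<^esub> x \<in> carrier G" using ab(2) x(1) by simp
  ultimately have "conj_subgroups G H (Sub (fst ab) (snd ab))" unfolding conj_iff by blast
  thus ?thesis using ab(1) unfolding Rset_def by blast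
qed

lemma Rset_dist: "H \<in> Rset \<Longrightarrow> K \<in> Rset \<Longrightarrow> conj_subgroups G H K \<Longrightarrow> H = K"
  unfolding Rset_def using dist by blast

lemma card_Rset: "card Rset = card S + 3"
proof -
  have "inj_on (\<lambda>ab. Sub (fst ab) (snd ab)) Idx"
  proof (rule inj_onI)
    fix ab ab' assume i: "ab \<in> Idx" "ab' \<in> Idx" "Sub (fst ab) (snd ab) = Sub (fst ab') (snd ab')"
    have "conj_subgroups G (Sub (fst ab) (snd ab)) (Sub (fst ab') (snd ab'))"
      using conj_refl[OF Sub_carrier] i(3) by metis
    thus "ab = ab'" using dist i by blast
  qed
  thus ?thesis unfolding Rset_def using card_Idx by (simp add: card_image)
qed

lemma reps: "conj_class_reps G p Rset"
  unfolding conj_class_reps_def using Rset_props Rset_complete Rset_dist by blast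

lemma classes_card: "card (subgroup_conj_classes G p) = card Rset"
proof -
  define cls where "cls H = {K. subgroup K G \<and> conj_subgroups G H K}" for H
  have sub_c: "H \<subseteq> carrier G" if "subgroup H G" for H using that subgroup.subset by blast
  have cls_eq: "cls H = cls K" if "subgroup H G" "subgroup K G" "conj_subgroups G H K" for H K
  proof -
    have "conj_subgroups G K H" using conj_sym[OF sub_c[OF that(1)] that(3)] .
    thus ?thesis unfolding cls_def using conj_trans sub_c that by blast
  qed
  have eq: "subgroup_conj_classes G p = cls ` Rset"
  proof
    show "subgroup_conj_classes G p \<subseteq> cls ` Rset"
    proof
      fix C assume "C \<in> subgroup_conj_classes G p"
      then obtain H where H: "subgroup H G" "card H = p" "C = cls H"
        unfolding subgroup_conj_classes_def cls_def by blast
      obtain K where K: "K \<in> Rset" "conj_subgroups G H K" using Rset_complete[OF H(1,2)] by blast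
      have "C = cls K" using H(3) cls_eq[OF H(1) _ K(2)] Rset_props[OF K(1)] by simp
      thus "C \<in> cls ` Rset" using K(1) by blast
    qed
    show "cls ` Rset \<subseteq> subgroup_conj_classes G p"
      unfolding subgroup_conj_classes_def cls_def using Rset_props by blast
  qed
  have inj: "inj_on cls Rset"
  proof (rule inj_onI)
    fix H K assume HK: "H \<in> Rset" "K \<in> Rset" "cls H = cls K"
    have sK: "subgroup K G" using Rset_props[OF HK(2)] by simp
    have "K \<in> cls K" unfolding cls_def using sK conj_refl[OF sub_c[OF sK]] by simp
    hence "K \<in> cls H" using HK(3) by simp
    hence "conj_subgroups G H K" unfolding cls_def by simp
    thus "H = K" using Rset_dist HK by blast
  qed
  show ?thesis unfolding eq using inj by (simp add: card_image)
qed


lemma gen_explicit: "gen a b = (int (lam ^ a mod q), 0, 0, int (lam ^ b mod q))"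
  by (simp add: gen_def dg_def e_def)

lemma Rset_explicit: "Rset = {Sub 0 1, Sub 1 1, Sub 1 (p - 1)} \<union> (\<lambda>k. Sub 1 k) ` S"
  unfolding Rset_def Idx_def by (simp add: image_Un image_image)

end

theorem mainTheorem3:
  fixes p q lam :: nat and S :: "nat set"
  assumes "Factorial_Ring.prime p" and "Factorial_Ring.prime q" and "p > 2" and "q > p" and "q \<ge> 5"
    and "p dvd q - 1" and "\<not> p dvd q + 1" and "\<not> p^2 dvd q - 1"
    and "lam < q" and "ord q lam = p"
    and "inv_pair_reps p S"
  shows "conj_class_reps (GL2 (int q)) p
           ({generate (GL2 (int q)) {(1, 0, 0, int lam)},
             generate (GL2 (int q)) {(int lam, 0, 0, int lam)},
             generate (GL2 (int q)) {(int lam, 0, 0, int ((lam ^ (p - 1)) mod q))}}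
            \<union> (\<lambda>k. generate (GL2 (int q)) {(int lam, 0, 0, int ((lam ^ k) mod q))}) ` S)
       \<and> card ({generate (GL2 (int q)) {(1, 0, 0, int lam)},
             generate (GL2 (int q)) {(int lam, 0, 0, int lam)},
             generate (GL2 (int q)) {(int lam, 0, 0, int ((lam ^ (p - 1)) mod q))}}
            \<union> (\<lambda>k. generate (GL2 (int q)) {(int lam, 0, 0, int ((lam ^ k) mod q))}) ` S)
           = (p + 3) div 2
       \<and> card (subgroup_conj_classes (GL2 (int q)) p) = (p + 3) div 2"
proof -
  interpret gsetup q p lam S
    by (intro gsetup.intro gl2q.intro gsetup_axioms.intro) (use assms in simp_all)
  have g01: "(1, 0, 0, int lam) = gen 0 1" using assms(2,9) prime_gt_1_nat[of q] by (simp add: gen_explicit)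
  have g11: "(int lam, 0, 0, int lam) = gen 1 1" using assms(9) by (simp add: gen_explicit)
  have g1k: "(int lam, 0, 0, int ((lam ^ k) mod q)) = gen 1 k" for k using assms(9) by (simp add: gen_explicit)
  have eqR: "{generate (GL2 (int q)) {(1, 0, 0, int lam)},
             generate (GL2 (int q)) {(int lam, 0, 0, int lam)},
             generate (GL2 (int q)) {(int lam, 0, 0, int ((lam ^ (p - 1)) mod q))}}
            \<union> (\<lambda>k. generate (GL2 (int q)) {(int lam, 0, 0, int ((lam ^ k) mod q))}) ` S = Rset"
    unfolding Rset_explicit g01 g11 g1k by (simp add: Sub_def)
  show ?thesis unfolding eqR using reps card_Rset card_S2 classes_card by simp
qed


end
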